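(* Let $u_L\in\mathcal V$ and let $a\in C^1([0,s_0'))$ with $a(0)=1$ and $a(s)\ge1$ for all $s$. For $s>0$ let $u_R=S^i_{u_L}(s)$ and $\tilde\eta_s(u)=a(s)\eta(u|u_L)-\eta(u|u_R)$, $\Pi_s=\{u:\tilde\eta_s(u)<0\}$. Then there exist $R,\bar s,s_0>0$ such that for every $0<s<s_0$ and every $u\in B_R(u_L)\cap\Pi_s$ there exists a unique $s^*(u)\in(0,\bar s)$ satisfying $$\eta\big(u\,|\,S^i_u(s^*(u))\big)=-\tilde\eta_s(u).$$
   Context: Let $\mathcal V\subset\mathbb R^n$ be open and connected, $f\in C^4(\mathcal V;\mathbb R^n)$, system $u_t+(f(u))_x=0$ strictly hyperbolic with eigenvalues $\lambda_k(u)$ and right eigenvectors $r_k(u)$ of $f'(u)$. $\eta$ is a smooth strictly convex entropy, and $\eta(u|v)=\eta(u)-\eta(v)-\nabla\eta(v)(u-v)$ is the relative entropy. $S^i_u(s)$, $s\ge0$, is the $i$-th shock (Hugoniot) curve from $u$, with $S^i_u(0)=u$ and $\frac{d}{ds}S^i_u(0)=r_i(u)$. $B_R(u_L)$ is the open ball of radius $R$ around $u_L$. *)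

theory Defs
  imports "HOL-Analysis.Analysis"
begin

text \<open>C^k regularity on a set (derivatives taken within the set; for open sets this is
the usual notion). Higher derivatives are represented as bounded linear maps.\<close>

definition C1_on :: "('a::real_normed_vector \<Rightarrow> 'b::real_normed_vector) \<Rightarrow> 'a set \<Rightarrow> bool" where
  "C1_on F D \<longleftrightarrow> (\<exists>F' :: 'a \<Rightarrow> ('a \<Rightarrow>\<^sub>L 'b).
     (\<forall>x\<in>D. (F has_derivative blinfun_apply (F' x)) (at x within D)) \<and> continuous_on D F')"

definition C2_on :: "('a::real_normed_vector \<Rightarrow> 'b::real_normed_vector) \<Rightarrow> 'a set \<Rightarrow> bool" where
  "C2_on F D \<longleftrightarrow> (\<exists>F' :: 'a \<Rightarrow> ('a \<Rightarrow>\<^sub>L 'b).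
     (\<forall>x\<in>D. (F has_derivative blinfun_apply (F' x)) (at x within D)) \<and> C1_on F' D)"

definition C3_on :: "('a::real_normed_vector \<Rightarrow> 'b::real_normed_vector) \<Rightarrow> 'a set \<Rightarrow> bool" where
  "C3_on F D \<longleftrightarrow> (\<exists>F' :: 'a \<Rightarrow> ('a \<Rightarrow>\<^sub>L 'b).
     (\<forall>x\<in>D. (F has_derivative blinfun_apply (F' x)) (at x within D)) \<and> C2_on F' D)"

definition C4_on :: "('a::real_normed_vector \<Rightarrow> 'b::real_normed_vector) \<Rightarrow> 'a set \<Rightarrow> bool" where
  "C4_on F D \<longleftrightarrow> (\<exists>F' :: 'a \<Rightarrow> ('a \<Rightarrow>\<^sub>L 'b).
     (\<forall>x\<in>D. (F has_derivative blinfun_apply (F' x)) (at x within D)) \<and> C3_on F' D)"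

text \<open>Strict hyperbolicity: f'(u) has the n pairwise distinct real eigenvalues lam k u
with (nonzero) right eigenvectors r k u, k ranging over the index type 'n (n = CARD('n)).\<close>

definition strictly_hyperbolic ::
  "(real^'n \<Rightarrow> real^'n) \<Rightarrow> (real^'n) set \<Rightarrow> ('n \<Rightarrow> real^'n \<Rightarrow> real) \<Rightarrow> ('n \<Rightarrow> real^'n \<Rightarrow> real^'n) \<Rightarrow> bool" where
  "strictly_hyperbolic f V lam r \<longleftrightarrow>
     (\<forall>u\<in>V. \<forall>k. r k u \<noteq> 0 \<and> frechet_derivative f (at u) (r k u) = lam k u *\<^sub>R r k u) \<and>
     (\<forall>u\<in>V. \<forall>j k. j \<noteq> k \<longrightarrow> lam j u \<noteq> lam k u)"

definition strictly_convex_entropy ::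
  "(real^'n \<Rightarrow> real^'n) \<Rightarrow> (real^'n) set \<Rightarrow> (real^'n \<Rightarrow> real) \<Rightarrow> bool" where
  "strictly_convex_entropy f V eta \<longleftrightarrow>
     C2_on eta V \<and>
     (\<exists>Deta :: real^'n \<Rightarrow> ((real^'n) \<Rightarrow>\<^sub>L real).
        (\<forall>v\<in>V. (eta has_derivative blinfun_apply (Deta v)) (at v)) \<and>
        (\<forall>u\<in>V. \<exists>H. (Deta has_derivative H) (at u) \<and> (\<forall>h. h \<noteq> 0 \<longrightarrow> blinfun_apply (H h) h > 0))) \<and>
     (\<exists>q :: real^'n \<Rightarrow> real. C1_on q V \<and>
        (\<forall>u\<in>V. (q has_derivative (\<lambda>h. frechet_derivative eta (at u) (frechet_derivative f (at u) h))) (at u)))"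

definition rel_entropy :: "(real^'n \<Rightarrow> real) \<Rightarrow> real^'n \<Rightarrow> real^'n \<Rightarrow> real" where
  "rel_entropy eta u v = eta u - eta v - frechet_derivative eta (at v) (u - v)"

text \<open>S is a (jointly C^1) family of i-th shock curves: defined on a set D, relatively open in
V \<times> [0,\<infinity>) and containing V \<times> {0}; S u 0 = u, d/ds S u 0 = r i u, and every S u s lies in V
on the Hugoniot locus of u (Rankine--Hugoniot condition).\<close>

definition shock_curves ::
  "(real^'n \<Rightarrow> real^'n) \<Rightarrow> (real^'n) set \<Rightarrow> ('n \<Rightarrow> real^'n \<Rightarrow> real^'n) \<Rightarrow> 'n \<Rightarrow>
   (real^'n \<Rightarrow> real \<Rightarrow> real^'n) \<Rightarrow> ((real^'n) \<times> real) set \<Rightarrow> bool" where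
  "shock_curves f V r i S D \<longleftrightarrow>
     openin (top_of_set (V \<times> {0..})) D \<and> V \<times> {0} \<subseteq> D \<and>
     C1_on (\<lambda>(u, s). S u s) D \<and>
     (\<forall>u\<in>V. S u 0 = u \<and> (S u has_vector_derivative r i u) (at 0 within {0..})) \<and>
     (\<forall>(u, s)\<in>D. S u s \<in> V \<and> (\<exists>\<sigma>. f (S u s) - f u = \<sigma> *\<^sub>R (S u s - u)))"

definition C1_on_Ico :: "(real \<Rightarrow> real) \<Rightarrow> real \<Rightarrow> bool" where
  "C1_on_Ico a b \<longleftrightarrow> (\<exists>a'. (\<forall>x\<in>{0..<b}. (a has_real_derivative a' x) (at x within {0..<b}))
                              \<and> continuous_on {0..<b} a')"

end

theory Submission imports Defs begin
lemma dist_pair_le: "dist (a,b) (c,d) \<le> dist a c + dist b d"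
  by (simp add: dist_Pair_Pair sqrt_sum_squares_le_sum)

lemma rel_deriv:
  fixes eta :: "'a::euclidean_space \<Rightarrow> real" and F' :: "'a \<Rightarrow> ('a \<Rightarrow>\<^sub>L real)"
    and F'' :: "'a \<Rightarrow> ('a \<Rightarrow>\<^sub>L ('a \<Rightarrow>\<^sub>L real))" and g :: "real \<Rightarrow> 'a"
  assumes e: "(eta has_derivative blinfun_apply (F' (g t))) (at (g t))"
    and e2: "(F' has_derivative blinfun_apply (F'' (g t))) (at (g t))"
    and gd: "(g has_vector_derivative g') (at t within T)"
  shows "((\<lambda>\<tau>. eta u - eta (g \<tau>) - blinfun_apply (F' (g \<tau>)) (u - g \<tau>)) has_real_derivative
           blinfun_apply (blinfun_apply (F'' (g t)) g') (g t - u)) (at t within T)"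
proof -
  have d1: "((\<lambda>\<tau>. eta (g \<tau>)) has_vector_derivative blinfun_apply (F' (g t)) g') (at t within T)"
    using vector_derivative_diff_chain_within[OF gd has_derivative_at_withinI[OF e]] by (simp add: o_def)
  have d2: "((\<lambda>\<tau>. F' (g \<tau>)) has_vector_derivative blinfun_apply (F'' (g t)) g') (at t within T)"
    using vector_derivative_diff_chain_within[OF gd has_derivative_at_withinI[OF e2]] by (simp add: o_def)
  have d3: "((\<lambda>\<tau>. blinfun_apply (F' (g \<tau>)) (u - g \<tau>)) has_vector_derivative
      blinfun_apply (F' (g t)) (- g') + blinfun_apply (blinfun_apply (F'' (g t)) g') (u - g t)) (at t within T)"
    using bounded_bilinear.has_vector_derivative[OF bounded_bilinear_blinfun_apply d2 has_vector_derivative_diff[OF has_vector_derivative_const gd]]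
    by simp
  have "((\<lambda>\<tau>. eta u - eta (g \<tau>) - blinfun_apply (F' (g \<tau>)) (u - g \<tau>)) has_vector_derivative
      0 - blinfun_apply (F' (g t)) g' - (blinfun_apply (F' (g t)) (- g') + blinfun_apply (blinfun_apply (F'' (g t)) g') (u - g t))) (at t within T)"
    by (intro has_vector_derivative_diff has_vector_derivative_const d1 d3)
  moreover have "0 - blinfun_apply (F' (g t)) g' - (blinfun_apply (F' (g t)) (- g') + blinfun_apply (blinfun_apply (F'' (g t)) g') (u - g t))
     = blinfun_apply (blinfun_apply (F'' (g t)) g') (g t - u)"
    by (simp add: blinfun.minus_right blinfun.diff_right)
  ultimately show ?thesis by (simp add: has_real_derivative_iff_has_vector_derivative)
qed

lemma curve_deriv:
  fixes G :: "('a::real_normed_vector \<times> real) \<Rightarrow> (('a \<times> real) \<Rightarrow>\<^sub>L 'b::real_normed_vector)"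
  assumes "((\<lambda>(u,s). S u s) has_derivative blinfun_apply (G (u,t))) (at (u,t) within D)"
    and "(\<lambda>\<tau>. (u,\<tau>)) ` T \<subseteq> D"
  shows "(S u has_vector_derivative blinfun_apply (G (u,t)) (0,1)) (at t within T)"
proof -
  have f: "((\<lambda>\<tau>. (u,\<tau>)) has_derivative (\<lambda>h. (0,h))) (at t within T)"
    by (auto intro!: derivative_eq_intros)
  have "((\<lambda>(u,s). S u s) has_derivative blinfun_apply (G (u,t))) (at ((\<lambda>\<tau>. (u,\<tau>)) t) within (\<lambda>\<tau>. (u,\<tau>)) ` T)"
    using assms has_derivative_subset by force
  from diff_chain_within[OF f this]
  have "((\<lambda>(u,s). S u s) \<circ> (\<lambda>\<tau>. (u,\<tau>)) has_derivative blinfun_apply (G(u,t)) \<circ> (\<lambda>h.(0,h))) (at t within T)" .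
  moreover have "blinfun_apply (G(u,t)) \<circ> (\<lambda>h.(0,h)) = (\<lambda>h. h *\<^sub>R blinfun_apply (G(u,t)) (0,1))"
  proof
    fix h :: real
    have "(0::'a,h) = h *\<^sub>R (0,1)" by simp
    then show "(blinfun_apply (G(u,t)) \<circ> (\<lambda>h.(0,h))) h = h *\<^sub>R blinfun_apply (G(u,t)) (0,1)"
      by (metis blinfun.scaleR_right comp_apply)
  qed
  ultimately show ?thesis by (simp add: has_vector_derivative_def o_def)
qed
theorem lemma4:
  fixes f :: "real^'n \<Rightarrow> real^'n" and V :: "(real^'n) set"
    and lam :: "'n \<Rightarrow> real^'n \<Rightarrow> real" and r :: "'n \<Rightarrow> real^'n \<Rightarrow> real^'n"
    and eta :: "real^'n \<Rightarrow> real" and i :: 'n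
    and S :: "real^'n \<Rightarrow> real \<Rightarrow> real^'n" and D :: "((real^'n) \<times> real) set"
    and uL :: "real^'n" and a :: "real \<Rightarrow> real" and s0' :: real
  assumes "open V" and "connected V"
    and "C4_on f V"
    and "strictly_hyperbolic f V lam r"
    and "strictly_convex_entropy f V eta"
    and "shock_curves f V r i S D"
    and "uL \<in> V"
    and "s0' > 0" and "C1_on_Ico a s0'" and "a 0 = 1" and "\<forall>s\<in>{0..<s0'}. a s \<ge> 1"
  shows "\<exists>R sbar s0. R > 0 \<and> sbar > 0 \<and> s0 > 0 \<and> s0 \<le> s0' \<and>
           ball uL R \<subseteq> V \<and>
           (\<forall>u\<in>ball uL R. \<forall>t\<in>{0..<sbar}. (u, t) \<in> D) \<and>
           (\<forall>s\<in>{0<..<s0}. (uL, s) \<in> D) \<and>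
           (\<forall>s\<in>{0<..<s0}. \<forall>u\<in>ball uL R.
              a s * rel_entropy eta u uL - rel_entropy eta u (S uL s) < 0 \<longrightarrow>
              (\<exists>!t. t \<in> {0<..<sbar} \<and>
                 rel_entropy eta u (S u t) = - (a s * rel_entropy eta u uL - rel_entropy eta u (S uL s))))"
proof -
  note Vo = assms(1)
  note uLV = assms(7)
  from assms(5) obtain F' where F'V: "\<forall>x\<in>V. (eta has_derivative blinfun_apply (F' x)) (at x within V)"
    and C1F': "C1_on F' V"
    and Deta_ex: "\<exists>Deta :: real^'n \<Rightarrow> ((real^'n) \<Rightarrow>\<^sub>L real).
        (\<forall>v\<in>V. (eta has_derivative blinfun_apply (Deta v)) (at v)) \<and>
        (\<forall>u\<in>V. \<exists>H. (Deta has_derivative H) (at u) \<and> (\<forall>h. h \<noteq> 0 \<longrightarrow> blinfun_apply (H h) h > 0))"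
    unfolding strictly_convex_entropy_def C2_on_def by blast
  from C1F' obtain F'' where F''V: "\<forall>x\<in>V. (F' has_derivative blinfun_apply (F'' x)) (at x within V)"
    and F''c: "continuous_on V F''"
    unfolding C1_on_def by blast
  have F'd: "(eta has_derivative blinfun_apply (F' x)) (at x)" if "x \<in> V" for x
    using F'V that at_within_open[OF that Vo] by metis
  have F''d: "(F' has_derivative blinfun_apply (F'' x)) (at x)" if "x \<in> V" for x
    using F''V that at_within_open[OF that Vo] by metis
  from Deta_ex obtain Deta :: "real^'n \<Rightarrow> ((real^'n) \<Rightarrow>\<^sub>L real)"
    where Detad: "\<forall>v\<in>V. (eta has_derivative blinfun_apply (Deta v)) (at v)"
    and Hpos: "\<forall>u\<in>V. \<exists>H. (Deta has_derivative H) (at u) \<and> (\<forall>h. h \<noteq> 0 \<longrightarrow> blinfun_apply (H h) h > 0)"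
    by blast
  have DetaF: "Deta v = F' v" if "v \<in> V" for v
  proof -
    have "blinfun_apply (F' v) = blinfun_apply (Deta v)"
      by (rule has_derivative_unique[OF F'd[OF that]]) (rule Detad[rule_format, OF that])
    then show ?thesis by (simp add: blinfun_apply_inject)
  qed
  have pos: "blinfun_apply (blinfun_apply (F'' w) h) h > 0" if wV: "w \<in> V" and hnz: "h \<noteq> 0" for w h
  proof -
    obtain H where H: "(Deta has_derivative H) (at w)" "\<forall>h. h \<noteq> 0 \<longrightarrow> blinfun_apply (H h) h > 0"
      using Hpos wV by blast
    have "(F' has_derivative H) (at w)"
      by (rule has_derivative_transform_within_open[OF H(1) Vo wV]) (simp add: DetaF)
    then have "H = blinfun_apply (F'' w)" by (rule has_derivative_unique[OF _ F''d[OF wV]])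
    then show ?thesis using H(2) hnz by simp
  qed
  have fre: "frechet_derivative eta (at v) = blinfun_apply (F' v)" if "v \<in> V" for v
    using frechet_derivative_at[OF F'd[OF that]] by simp
  have etac: "continuous_on V eta"
    by (intro continuous_at_imp_continuous_on ballI has_derivative_continuous[OF F'd])
  have F'c: "continuous_on V F'"
    by (intro continuous_at_imp_continuous_on ballI has_derivative_continuous[OF F''d])
  note sc = assms(6)[unfolded shock_curves_def]
  have Dopen: "openin (top_of_set (V \<times> {0..})) D" using sc[THEN conjunct1] .
  have V0D: "V \<times> {0} \<subseteq> D" using sc[THEN conjunct2, THEN conjunct1] .
  have C1S: "C1_on (\<lambda>(u, s). S u s) D" using sc[THEN conjunct2, THEN conjunct2, THEN conjunct1] .
  have S0: "\<forall>u\<in>V. S u 0 = u \<and> (S u has_vector_derivative r i u) (at 0 within {0..})"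
    using sc[THEN conjunct2, THEN conjunct2, THEN conjunct2, THEN conjunct1] .
  have SV': "\<forall>(u, s)\<in>D. S u s \<in> V \<and> (\<exists>\<sigma>. f (S u s) - f u = \<sigma> *\<^sub>R (S u s - u))"
    using sc[THEN conjunct2, THEN conjunct2, THEN conjunct2, THEN conjunct2] .
  have SV: "S u s \<in> V" if "(u,s) \<in> D" for u s using SV' that by auto
  from C1S obtain G where Gd: "\<forall>x\<in>D. ((\<lambda>(u, s). S u s) has_derivative blinfun_apply (G x)) (at x within D)"
    and Gc: "continuous_on D G" unfolding C1_on_def by blast
  define Sd where "Sd u t = blinfun_apply (G (u,t)) (0,1)" for u t
  have Sdc: "continuous_on D (\<lambda>p. blinfun_apply (G p) (0,1))" using Gc by (intro continuous_intros)
  have Sc: "continuous_on D (\<lambda>(u,s). S u s)" by (rule has_derivative_continuous_on[of D "\<lambda>(u,s). S u s" "\<lambda>x. blinfun_apply (G x)"]) (use Gd in blast)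
  have Sder: "(S u has_vector_derivative Sd u t) (at t within T)"
    if "(u,t) \<in> D" "(\<lambda>\<tau>. (u,\<tau>)) ` T \<subseteq> D" for u t T
    unfolding Sd_def by (rule curve_deriv[where S=S and G=G and u=u and t=t, OF Gd[rule_format, OF that(1)] that(2)])
  from Dopen obtain T0 where T0: "open T0" "D = V \<times> {0..} \<inter> T0" using openin_open by blast
  have "(uL,0) \<in> T0" using V0D uLV T0 by auto
  then obtain \<rho>D where \<rho>D: "\<rho>D > 0" "ball (uL,0) \<rho>D \<subseteq> T0" using T0(1) open_contains_ball by blast
  obtain \<rho>V where \<rho>V: "\<rho>V > 0" "ball uL \<rho>V \<subseteq> V" using Vo uLV open_contains_ball by blast
  have inD: "(u,\<tau>) \<in> D" if "u \<in> V" "dist u uL < \<rho>D/2" "0 \<le> \<tau>" "\<tau> < \<rho>D/2" for u \<tau>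
  proof -
    have "dist (uL,0) (u,\<tau>) \<le> dist uL u + dist 0 \<tau>" by (rule dist_pair_le)
    also have "\<dots> < \<rho>D" using that by (simp add: dist_commute dist_real_def)
    finally have "(u,\<tau>) \<in> T0" using \<rho>D(2) by auto
    then show ?thesis using T0(2) that by auto
  qed
  define r0 where "r0 = Sd uL 0"
  have r0eq: "r0 = r i uL"
  proof -
    let ?T = "{0..\<rho>D/4}"
    have sub: "(\<lambda>\<tau>. (uL,\<tau>)) ` ?T \<subseteq> D" using inD uLV \<rho>D(1) by auto
    have "(uL,0) \<in> D" using V0D uLV by auto
    have "(S uL has_vector_derivative r0) (at 0 within cbox 0 (\<rho>D/4))"
      unfolding r0_def cbox_interval using Sder[OF \<open>(uL,0) \<in> D\<close> sub] .
    moreover have "(S uL has_vector_derivative r i uL) (at 0 within cbox 0 (\<rho>D/4))"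
      using S0 uLV has_vector_derivative_within_subset[of "S uL" "r i uL" 0 "{0..}" "cbox 0 (\<rho>D/4)"]
      by (auto simp: cbox_interval)
    ultimately show ?thesis
      using vector_derivative_unique_within_closed_interval[of 0 "\<rho>D/4" 0] \<rho>D(1) by (auto simp: cbox_interval)
  qed
  have r0nz: "r0 \<noteq> 0" using assms(4) uLV unfolding strictly_hyperbolic_def r0eq by auto

  define \<Phi> where "\<Phi> = (\<lambda>p::(real^'n) \<times> (real^'n) \<times> (real^'n). blinfun_apply (blinfun_apply (F'' (fst p)) (fst (snd p))) (snd (snd p)))"
  have \<Phi>pos0: "\<Phi> (uL,r0,r0) > 0" unfolding \<Phi>_def using pos[OF uLV r0nz] by simp
  have cF: "isCont F'' uL" using continuous_on_eq_continuous_at[OF Vo] F''c uLV by blast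
  have "isCont fst (uL,r0,r0)" by (intro continuous_intros)
  then have cF2: "isCont (\<lambda>p::(real^'n) \<times> (real^'n) \<times> (real^'n). F'' (fst p)) (uL,r0,r0)"
    by (rule isCont_o2) (simp add: cF)
  have "isCont \<Phi> (uL,r0,r0)" unfolding \<Phi>_def by (intro continuous_intros cF2)
  from this[unfolded continuous_at_eps_delta, rule_format, OF \<Phi>pos0]
  obtain \<epsilon> where \<epsilon>: "\<epsilon> > 0" "\<forall>z. dist z (uL,r0,r0) < \<epsilon> \<longrightarrow> dist (\<Phi> z) (\<Phi> (uL,r0,r0)) < \<Phi> (uL,r0,r0)"
    by blast
  have \<Phi>pos: "\<Phi> (w,x,y) > 0" if "dist w uL + dist x r0 + dist y r0 < \<epsilon>" for w x y
  proof -
    have "dist (w,x,y) (uL,r0,r0) \<le> dist w uL + dist (x,y) (r0,r0)" by (rule dist_pair_le)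
    also have "\<dots> \<le> dist w uL + (dist x r0 + dist y r0)" using dist_pair_le[of x y r0 r0] by simp
    finally have "dist (w,x,y) (uL,r0,r0) < \<epsilon>" using that by simp
    then have "dist (\<Phi> (w,x,y)) (\<Phi> (uL,r0,r0)) < \<Phi> (uL,r0,r0)" using \<epsilon>(2) by blast
    then show ?thesis by (simp add: dist_real_def abs_less_iff)
  qed
  have uL0D: "(uL,0) \<in> D" using V0D uLV by auto
  have Sc0: "\<exists>d>0. \<forall>u \<tau>. (u,\<tau>) \<in> D \<longrightarrow> dist (u,\<tau>) (uL,0) < d \<longrightarrow> dist (S u \<tau>) uL < e" if "e > 0" for e
  proof -
    obtain d where "d>0" "\<forall>x'\<in>D. dist x' (uL,0) < d \<longrightarrow> dist ((\<lambda>(u,s). S u s) x') ((\<lambda>(u,s). S u s) (uL,0)) < e"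
      using Sc uL0D \<open>e > 0\<close> unfolding continuous_on_iff by blast
    then show ?thesis using S0 uLV by auto
  qed
  have Sdc0: "\<exists>d>0. \<forall>u \<tau>. (u,\<tau>) \<in> D \<longrightarrow> dist (u,\<tau>) (uL,0) < d \<longrightarrow> dist (Sd u \<tau>) r0 < e" if "e > 0" for e
  proof -
    obtain d where "d>0" "\<forall>x'\<in>D. dist x' (uL,0) < d \<longrightarrow> dist ((\<lambda>p. blinfun_apply (G p) (0,1)) x') ((\<lambda>p. blinfun_apply (G p) (0,1)) (uL,0)) < e"
      using Sdc uL0D \<open>e > 0\<close> unfolding continuous_on_iff by blast
    then show ?thesis unfolding r0_def Sd_def by auto
  qed
  obtain d1 where d1: "d1 > 0" "\<forall>u \<tau>. (u,\<tau>) \<in> D \<longrightarrow> dist (u,\<tau>) (uL,0) < d1 \<longrightarrow> dist (S u \<tau>) uL < \<epsilon>/3"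
    using Sc0[of "\<epsilon>/3"] \<epsilon>(1) by auto
  obtain d1' where d1': "d1' > 0" "\<forall>u \<tau>. (u,\<tau>) \<in> D \<longrightarrow> dist (u,\<tau>) (uL,0) < d1' \<longrightarrow> dist (Sd u \<tau>) r0 < \<epsilon>/6"
    using Sdc0[of "\<epsilon>/6"] \<epsilon>(1) by auto
  define \<rho> where "\<rho> = min (min (\<rho>D/2) \<rho>V) (min d1 d1' / 2)"
  have \<rho>pos: "\<rho> > 0" unfolding \<rho>_def using \<rho>D \<rho>V d1 d1' by simp
  have ballV: "ball uL \<rho> \<subseteq> V" using \<rho>V(2) unfolding \<rho>_def by auto
  have inD': "(u,\<tau>) \<in> D" if "u \<in> ball uL \<rho>" "\<tau> \<in> {0..<\<rho>}" for u \<tau>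
    using inD[of u \<tau>] that ballV unfolding \<rho>_def by (auto simp: dist_commute)
  have near: "dist (S u \<tau>) uL < \<epsilon>/3 \<and> dist (Sd u \<tau>) r0 < \<epsilon>/6" if "u \<in> ball uL \<rho>" "\<tau> \<in> {0..<\<rho>}" for u \<tau>
  proof -
    have "dist (u,\<tau>) (uL,0) \<le> dist u uL + dist \<tau> 0" by (rule dist_pair_le)
    also have "\<dots> < 2*\<rho>" using that by (auto simp: dist_commute dist_real_def)
    finally have "dist (u,\<tau>) (uL,0) < d1" "dist (u,\<tau>) (uL,0) < d1'" unfolding \<rho>_def by auto
    then show ?thesis using d1 d1' inD'[OF that] by blast
  qed
  define \<phi> where "\<phi> u \<tau> = eta u - eta (S u \<tau>) - blinfun_apply (F' (S u \<tau>)) (u - S u \<tau>)" for u \<tau>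
  have SuV: "S u \<tau> \<in> V" if "u \<in> ball uL \<rho>" "\<tau> \<in> {0..<\<rho>}" for u \<tau>
    using SV[OF inD'[OF that]] .
  have phid: "(\<phi> u has_real_derivative blinfun_apply (blinfun_apply (F'' (S u \<tau>)) (Sd u \<tau>)) (S u \<tau> - u)) (at \<tau> within {0..<\<rho>})"
    if "u \<in> ball uL \<rho>" "\<tau> \<in> {0..<\<rho>}" for u \<tau>
  proof -
    have sub: "(\<lambda>t. (u,t)) ` {0..<\<rho>} \<subseteq> D" using inD' that(1) by auto
    have "(S u has_vector_derivative Sd u \<tau>) (at \<tau> within {0..<\<rho>})" by (rule Sder[OF inD'[OF that] sub])
    from rel_deriv[where g="S u" and t=\<tau> and F'=F' and F''=F'' and eta=eta, OF F'd[OF SuV[OF that]] F''d[OF SuV[OF that]] this, of u]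
    show ?thesis unfolding \<phi>_def .
  qed
  have phic: "continuous_on {0..<\<rho>} (\<phi> u)" if "u \<in> ball uL \<rho>" for u
    unfolding continuous_on_eq_continuous_within using phid[OF that] DERIV_continuous by blast
  have phipos: "blinfun_apply (blinfun_apply (F'' (S u \<tau>)) (Sd u \<tau>)) (S u \<tau> - u) > 0"
    if uin: "u \<in> ball uL \<rho>" and \<tau>in: "\<tau> \<in> {0<..<\<rho>}" for u \<tau>
  proof -
    have \<tau>0: "0 < \<tau>" "\<tau> < \<rho>" using \<tau>in by auto
    have uV: "u \<in> V" using uin ballV by auto
    have sub: "(\<lambda>t. (u,t)) ` {0..\<tau>} \<subseteq> D" using inD' uin \<tau>0 by auto
    have der: "(S u has_vector_derivative Sd u x) (at x within {0..\<tau>})" if "x \<in> {0..\<tau>}" for x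
    proof -
      have "(u,x) \<in> D" using sub that by auto
      then show ?thesis by (rule Sder[OF _ sub])
    qed
    have bnd: "norm (Sd u x - Sd u 0) \<le> \<epsilon>/3" if "x \<in> {0..\<tau>}" for x
    proof -
      have "dist (Sd u x) r0 < \<epsilon>/6" "dist (Sd u 0) r0 < \<epsilon>/6" using near uin that \<tau>0 \<rho>pos by auto
      then have "dist (Sd u x) (Sd u 0) < \<epsilon>/3" using dist_triangle2[of "Sd u x" "Sd u 0" r0] by simp
      then show ?thesis by (simp add: dist_norm)
    qed
    have lin: "norm (S u \<tau> - S u 0 - (\<tau> - 0) *\<^sub>R Sd u 0) \<le> norm (\<tau> - 0) * (\<epsilon>/3)"
      by (rule vector_differentiable_bound_linearization[where S="{0..\<tau>}"])
        (use der bnd \<tau>0 in \<open>auto simp: closed_segment_eq_real_ivl\<close>)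
    have Su0: "S u 0 = u" using S0 uV by auto
    define y where "y = (1/\<tau>) *\<^sub>R (S u \<tau> - u)"
    have Sy: "S u \<tau> - u = \<tau> *\<^sub>R y" using \<tau>0 unfolding y_def by simp
    have "norm (y - Sd u 0) \<le> \<epsilon>/3"
    proof -
      have "y - Sd u 0 = (1/\<tau>) *\<^sub>R (S u \<tau> - u - \<tau> *\<^sub>R Sd u 0)" unfolding y_def using \<tau>0 by (simp add: algebra_simps)
      then have "norm (y - Sd u 0) = (1/\<tau>) * norm (S u \<tau> - u - \<tau> *\<^sub>R Sd u 0)" using \<tau>0 by simp
      also have "\<dots> \<le> (1/\<tau>) * (\<tau> * (\<epsilon>/3))" using lin Su0 \<tau>0 by (intro mult_left_mono) auto
      also have "\<dots> = \<epsilon>/3" using \<tau>0 by simp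
      finally show ?thesis .
    qed
    moreover have "dist (Sd u 0) r0 < \<epsilon>/6" using near uin \<rho>pos by auto
    ultimately have dy: "dist y r0 < \<epsilon>/2" using dist_triangle[of y r0 "Sd u 0"] by (simp add: dist_norm)
    have "dist (S u \<tau>) uL < \<epsilon>/3" "dist (Sd u \<tau>) r0 < \<epsilon>/6" using near uin \<tau>0 by auto
    then have "\<Phi> (S u \<tau>, Sd u \<tau>, y) > 0" using \<Phi>pos dy by simp
    then show ?thesis unfolding Sy \<Phi>_def using \<tau>0 by (simp add: blinfun.scaleR_right mult_pos_pos)
  qed
  have mono: "\<phi> u x < \<phi> u y" if uin: "u \<in> ball uL \<rho>" and xy: "0 \<le> x" "x < y" "y < \<rho>" for u x y
  proof (rule DERIV_pos_imp_increasing_open[OF \<open>x < y\<close>])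
    fix z assume "x < z" "z < y"
    then have z: "z \<in> {0<..<\<rho>}" using xy by auto
    have "at z within {0..<\<rho>} = at z" by (rule at_within_open_subset[of z "{0<..<\<rho>}"]) (use z in auto)
    moreover have "z \<in> {0..<\<rho>}" using z by auto
    ultimately have "(\<phi> u has_real_derivative blinfun_apply (blinfun_apply (F'' (S u z)) (Sd u z)) (S u z - u)) (at z)"
      using phid[OF uin] by metis
    then show "\<exists>d. (\<phi> u has_real_derivative d) (at z) \<and> 0 < d"
      using phipos[OF uin z] by blast
  next
    show "continuous_on {x..y} (\<phi> u)" using phic[OF uin] by (rule continuous_on_subset) (use xy in auto)
  qed
  have phi0: "\<phi> u 0 = 0" if "u \<in> ball uL \<rho>" for u
    using S0 that ballV unfolding \<phi>_def by auto
  define t1 where "t1 = \<rho>/2"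
  define m where "m = \<phi> uL t1"
  have uLball: "uL \<in> ball uL \<rho>" using \<rho>pos by simp
  have mpos: "m > 0" using mono[OF uLball, of 0 t1] phi0[OF uLball] \<rho>pos unfolding m_def t1_def by simp
  have t1in: "t1 \<in> {0..<\<rho>}" "0 < t1" using \<rho>pos unfolding t1_def by auto
  have ct1: "continuous_on (ball uL \<rho>) (\<lambda>u. \<phi> u t1)"
  proof -
    have sub: "(\<lambda>u. (u,t1)) ` ball uL \<rho> \<subseteq> D" using inD' t1in by auto
    have "continuous_on (ball uL \<rho>) (\<lambda>x. (\<lambda>(u,s). S u s) (x,t1))"
      by (rule continuous_on_compose2[OF Sc _ sub]) (intro continuous_intros)
    then have c1: "continuous_on (ball uL \<rho>) (\<lambda>u. S u t1)" by simp
    have imgV: "(\<lambda>u. S u t1) ` ball uL \<rho> \<subseteq> V" using SuV t1in by auto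
    have c2: "continuous_on (ball uL \<rho>) (\<lambda>u. eta (S u t1))" by (rule continuous_on_compose2[OF etac c1 imgV])
    have c3: "continuous_on (ball uL \<rho>) (\<lambda>u. F' (S u t1))" by (rule continuous_on_compose2[OF F'c c1 imgV])
    have c4: "continuous_on (ball uL \<rho>) eta" by (rule continuous_on_subset[OF etac ballV])
    show ?thesis unfolding \<phi>_def by (intro continuous_intros c1 c2 c3 c4)
  qed
  obtain R3 where R3: "R3 > 0" "\<forall>u\<in>ball uL \<rho>. dist u uL < R3 \<longrightarrow> dist (\<phi> u t1) (\<phi> uL t1) < m/2"
    using ct1 uLball mpos unfolding continuous_on_iff by (metis half_gt_zero)
  have phit1: "\<phi> u t1 > m/2" if "u \<in> ball uL \<rho>" "dist u uL < R3" for u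
  proof -
    have "dist (\<phi> u t1) m < m/2" using R3(2) that unfolding m_def by blast
    then have "\<bar>\<phi> u t1 - m\<bar> < m/2" by (simp add: dist_real_def)
    then show ?thesis by linarith
  qed
  define \<Psi> where "\<Psi> = (\<lambda>p::(real^'n)\<times>(real^'n). eta (fst p) - eta (snd p) - blinfun_apply (F' (snd p)) (fst p - snd p))"
  have \<Psi>c: "continuous_on (V \<times> V) \<Psi>"
  proof -
    have a1: "continuous_on (V\<times>V) (\<lambda>p. eta (fst p))"
      by (rule continuous_on_compose2[OF etac]) (auto intro: continuous_intros)
    have a2: "continuous_on (V\<times>V) (\<lambda>p. eta (snd p))"
      by (rule continuous_on_compose2[OF etac]) (auto intro: continuous_intros)
    have a3: "continuous_on (V\<times>V) (\<lambda>p. F' (snd p))"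
      by (rule continuous_on_compose2[OF F'c]) (auto intro: continuous_intros)
    show ?thesis unfolding \<Psi>_def by (intro continuous_intros a1 a2 a3)
  qed
  have \<Psi>0: "\<Psi> (uL,uL) = 0" unfolding \<Psi>_def by simp
  have m6: "m/6 > 0" using mpos by simp
  obtain \<delta>\<Psi> where \<delta>\<Psi>: "\<delta>\<Psi> > 0" "\<forall>p\<in>V\<times>V. dist p (uL,uL) < \<delta>\<Psi> \<longrightarrow> dist (\<Psi> p) (\<Psi> (uL,uL)) < m/6"
    using \<Psi>c uLV m6 unfolding continuous_on_iff by blast
  have \<Psi>small: "\<bar>\<Psi> (x,w)\<bar> < m/6" if "x \<in> V" "w \<in> V" "dist x uL + dist w uL < \<delta>\<Psi>" for x w
  proof -
    have "dist (x,w) (uL,uL) \<le> dist x uL + dist w uL" by (rule dist_pair_le)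
    then have "dist (\<Psi> (x,w)) (\<Psi> (uL,uL)) < m/6" using \<delta>\<Psi>(2) that by auto
    then show ?thesis using \<Psi>0 by (simp add: dist_real_def)
  qed
  obtain d3 where d3: "d3 > 0" "\<forall>u \<tau>. (u,\<tau>) \<in> D \<longrightarrow> dist (u,\<tau>) (uL,0) < d3 \<longrightarrow> dist (S u \<tau>) uL < \<delta>\<Psi>/2"
    using Sc0[of "\<delta>\<Psi>/2"] \<delta>\<Psi>(1) by auto
  from assms(9) obtain a' where a': "\<forall>x\<in>{0..<s0'}. (a has_real_derivative a' x) (at x within {0..<s0'})"
    unfolding C1_on_Ico_def by blast
  have "continuous (at 0 within {0..<s0'}) a" using a' assms(8) by (intro DERIV_continuous[of a "a' 0"]) auto
  then obtain d4 where d4: "d4 > 0" "\<forall>x\<in>{0..<s0'}. dist x 0 < d4 \<longrightarrow> dist (a x) (a 0) < 1"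
    unfolding continuous_within_eps_delta by (meson zero_less_one)
  define R where "R = min (min \<rho> R3) (\<delta>\<Psi>/2)"
  define s0 where "s0 = min (min s0' d4) (min \<rho> d3)"
  have Rpos: "R > 0" unfolding R_def using \<rho>pos R3 \<delta>\<Psi> by simp
  have s0pos: "s0 > 0" unfolding s0_def using \<rho>pos d3 d4 assms(8) by simp
  have Rball: "ball uL R \<subseteq> ball uL \<rho>" unfolding R_def by auto
  show ?thesis
  proof (intro exI conjI)
    show "R > 0" "\<rho> > 0" "s0 > 0" by (fact Rpos, fact \<rho>pos, fact s0pos)
    show "s0 \<le> s0'" unfolding s0_def by simp
    show "ball uL R \<subseteq> V" using Rball ballV by auto
    show "\<forall>u\<in>ball uL R. \<forall>t\<in>{0..<\<rho>}. (u, t) \<in> D" using Rball inD' by blast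
    show "\<forall>s\<in>{0<..<s0}. (uL, s) \<in> D" using inD'[OF uLball] unfolding s0_def by auto
    show "\<forall>s\<in>{0<..<s0}. \<forall>u\<in>ball uL R.
              a s * rel_entropy eta u uL - rel_entropy eta u (S uL s) < 0 \<longrightarrow>
              (\<exists>!t. t \<in> {0<..<\<rho>} \<and>
                 rel_entropy eta u (S u t) = - (a s * rel_entropy eta u uL - rel_entropy eta u (S uL s)))"
    proof (intro ballI impI)
      fix s u
      assume s: "s \<in> {0<..<s0}" and u: "u \<in> ball uL R"
        and neg: "a s * rel_entropy eta u uL - rel_entropy eta u (S uL s) < 0"
      define c where "c = - (a s * rel_entropy eta u uL - rel_entropy eta u (S uL s))"
      have cpos: "c > 0" using neg unfolding c_def by simp
      have u\<rho>: "u \<in> ball uL \<rho>" using u Rball by auto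
      have uV: "u \<in> V" using u\<rho> ballV by auto
      have du: "dist u uL < R" using u by (simp add: dist_commute)
      have s\<rho>: "s \<in> {0..<\<rho>}" using s unfolding s0_def by auto
      have sD: "(uL,s) \<in> D" using inD'[OF uLball s\<rho>] .
      have SuLV: "S uL s \<in> V" using SV[OF sD] .
      have E1: "rel_entropy eta u uL = \<Psi> (u,uL)" unfolding rel_entropy_def \<Psi>_def using fre[OF uLV] by simp
      have E2: "rel_entropy eta u (S uL s) = \<Psi> (u, S uL s)" unfolding rel_entropy_def \<Psi>_def using fre[OF SuLV] by simp
      have duh: "dist u uL < \<delta>\<Psi>/2" "dist u uL < R3" using du unfolding R_def by auto
      have b1: "\<bar>\<Psi> (u,uL)\<bar> < m/6" using \<Psi>small[OF uV uLV] duh \<delta>\<Psi>(1) by simp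
      have "dist (uL,s) (uL,0) \<le> dist uL uL + dist s 0" by (rule dist_pair_le)
      then have "dist (uL,s) (uL,0) < d3" using s unfolding s0_def by (simp add: dist_real_def)
      then have "dist (S uL s) uL < \<delta>\<Psi>/2" using d3(2) sD by blast
      then have b2: "\<bar>\<Psi> (u,S uL s)\<bar> < m/6" using \<Psi>small[OF uV SuLV] duh by simp
      have "s \<in> {0..<s0'}" "dist s 0 < d4" using s unfolding s0_def by (auto simp: dist_real_def)
      then have "dist (a s) (a 0) < 1" using d4(2) by blast
      then have as2: "a s < 2" using assms(10) by (simp add: dist_real_def abs_less_iff)
      have as1: "a s \<ge> 1" using assms(11) \<open>s \<in> {0..<s0'}\<close> by blast
      have "a s * \<bar>\<Psi> (u,uL)\<bar> \<le> 2 * \<bar>\<Psi> (u,uL)\<bar>" using as2 by (intro mult_right_mono) auto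
      moreover have "- (a s * \<Psi> (u,uL)) \<le> a s * \<bar>\<Psi> (u,uL)\<bar>" using as1
        by (metis abs_ge_minus_self abs_mult abs_of_nonneg dual_order.trans mult_minus_right zero_le_one)
      ultimately have cm: "c < m/2" unfolding c_def E1 E2 using b1 b2 by linarith
      have phiu: "\<phi> u t1 > m/2" using phit1[OF u\<rho>] duh by simp
      have cont: "continuous_on {0..t1} (\<phi> u)"
        using phic[OF u\<rho>] by (rule continuous_on_subset) (use t1in in auto)
      obtain t where t: "0 \<le> t" "t \<le> t1" "\<phi> u t = c"
        using IVT'[of "\<phi> u" 0 c t1, OF _ _ _ cont] phi0[OF u\<rho>] cpos cm phiu t1in by force
      have tin: "t \<in> {0<..<\<rho>}" using t phi0[OF u\<rho>] cpos t1in unfolding t1_def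
        by (cases "t = 0") auto
      have rel: "rel_entropy eta u (S u t') = \<phi> u t'" if "t' \<in> {0..<\<rho>}" for t'
        unfolding rel_entropy_def \<phi>_def using fre[OF SuV[OF u\<rho> that]] by simp
      have "\<exists>!t. t \<in> {0<..<\<rho>} \<and> rel_entropy eta u (S u t) = c"
      proof (rule ex1I[of _ t])
        show "t \<in> {0<..<\<rho>} \<and> rel_entropy eta u (S u t) = c" using tin rel t by auto
      next
        fix t' assume t': "t' \<in> {0<..<\<rho>} \<and> rel_entropy eta u (S u t') = c"
        then have pt': "\<phi> u t' = c" using rel by auto
        show "t' = t"
        proof (rule ccontr)
          assume "t' \<noteq> t"
          then consider "t' < t" | "t < t'" by linarith
          then show False
          proof cases
            case 1 then show ?thesis using mono[OF u\<rho>, of t' t] t' tin pt' t by auto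
          next
            case 2 then show ?thesis using mono[OF u\<rho>, of t t'] t' tin pt' t by auto
          qed
        qed
      qed
      then show "\<exists>!t. t \<in> {0<..<\<rho>} \<and>
                 rel_entropy eta u (S u t) = - (a s * rel_entropy eta u uL - rel_entropy eta u (S uL s))"
        unfolding c_def .
    qed
  qed
qed
end
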